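(* Let $c\in\mathbb{R}$ with $0<c<1$. Then for every $s\in\mathbb{C}$, $$\eta(s)=\frac{1}{2}\int_{-\infty}^{\infty}\frac{(c+it)^{-s}}{\sin\big(\pi(c+it)\big)}\,dt .$$
   Context: $\eta(s)$ is Dirichlet's eta (alternating zeta) function, $\eta(s)=-\sum_{k\ge1}(-1)^k k^{-s}$ for $\operatorname{Re}s>0$, extended to an entire function; equivalently $\eta(s)=(1-2^{1-s})\zeta(s)$. Powers $(c+it)^{-s}$ use the principal branch. *)

theory Defs
  imports "HOL-Complex_Analysis.Complex_Analysis"
begin

definition eta :: "complex \<Rightarrow> complex" where
  "eta = (THE f. f holomorphic_on UNIV \<and>
            (\<forall>s. 0 < Re s \<longrightarrow>
               (\<lambda>n. (-1) ^ n * of_nat (Suc n) powr (- s)) sums f s))"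

end

theory Submission
  imports Defs "HOL-Real_Asymp.Real_Asymp"
begin

lemma sin_lower1:
  fixes z :: complex
  shows "\<bar>sin (Re z)\<bar> * ((exp (Im z) + exp (- Im z)) / 2) \<le> norm (sin z)"
proof -
  have "\<bar>Re (sin z)\<bar> \<le> norm (sin z)" by (rule abs_Re_le_cmod)
  moreover have "\<bar>Re (sin z)\<bar> = \<bar>sin (Re z)\<bar> * ((exp (Im z) + exp (- Im z)) / 2)"
    by (simp add: Re_sin abs_mult add_pos_pos)
  ultimately show ?thesis by simp
qed

lemma sin_lower2:
  fixes z :: complex
  shows "\<bar>exp (Im z) - exp (- Im z)\<bar> / 2 \<le> norm (sin z)"
proof -
  define x where "x = Re z"
  define y where "y = Im z"
  define C where "C = (exp y + exp (- y)) / 2"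
  define S where "S = (exp y - exp (- y)) / 2"
  have CS: "C^2 = S^2 + 1"
    by (simp add: C_def S_def power2_eq_square field_simps exp_minus)
  have "(norm (sin z))^2 = (Re (sin z))^2 + (Im (sin z))^2"
    by (simp add: cmod_power2)
  also have "\<dots> = (sin x)^2 * C^2 + (cos x)^2 * S^2"
    by (simp add: Re_sin Im_sin x_def y_def C_def S_def power_mult_distrib power_divide)
  also have "\<dots> = S^2 * ((sin x)^2 + (cos x)^2) + (sin x)^2"
    using CS by algebra
  also have "\<dots> = S^2 + (sin x)^2" by simp
  finally have "S^2 \<le> (norm (sin z))^2" by simp
  hence "\<bar>S\<bar> \<le> norm (sin z)"
    using abs_le_square_iff by force
  thus ?thesis by (simp add: S_def y_def)
qed

lemma norm_powr_bound1:
  fixes z s :: complex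
  assumes "0 \<le> Re z"
  shows "norm (z powr (-s)) \<le> norm z powr (- Re s) * exp (\<bar>Im s\<bar> * (pi/2))"
proof -
  have A: "\<bar>Arg z\<bar> \<le> pi/2" using assms Arg_Re_nonneg by blast
  have "Im s * Arg z \<le> \<bar>Im s\<bar> * (pi/2)"
  proof -
    have "Im s * Arg z \<le> \<bar>Im s\<bar> * \<bar>Arg z\<bar>" by (metis abs_ge_self abs_mult)
    also have "\<dots> \<le> \<bar>Im s\<bar> * (pi/2)" using A by (intro mult_left_mono) auto
    finally show ?thesis .
  qed
  hence "exp (Im s * Arg z) \<le> exp (\<bar>Im s\<bar> * (pi/2))" by simp
  hence "norm z powr (- Re s) * exp (Im s * Arg z) \<le> norm z powr (- Re s) * exp (\<bar>Im s\<bar> * (pi/2))"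
    by (intro mult_left_mono) auto
  thus ?thesis by (simp add: norm_powr_complex)
qed

lemma powr_le_exp_half:
  fixes u R :: real
  assumes "0 < u" "0 \<le> R"
  shows "u powr R \<le> (2*R+1) powr R * exp (u/2)"
proof -
  have k: "0 < 2*R+1" using assms by simp
  have "ln (u/(2*R+1)) \<le> u/(2*R+1) - 1"
    by (rule ln_le_minus_one) (use assms k in simp)
  hence "ln u \<le> u/(2*R+1) + ln (2*R+1)"
    using assms k by (simp add: ln_div)
  hence "R * ln u \<le> R * (u/(2*R+1)) + R * ln (2*R+1)"
    using assms by (metis distrib_left mult_left_mono)
  moreover have "R * (u/(2*R+1)) \<le> u/2"
    using assms k by (simp add: field_simps)
  ultimately have "R * ln u \<le> u/2 + R * ln (2*R+1)" by linarith
  hence "exp (R * ln u) \<le> exp (R * ln (2*R+1) + u/2)" by simp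
  thus ?thesis using assms k by (simp add: powr_def exp_add)
qed

lemma norm_powr_master:
  fixes z s :: complex and a0 R :: real
  assumes "0 < a0" "a0 \<le> Re z" "\<bar>Re s\<bar> \<le> R" "\<bar>Im s\<bar> \<le> R"
  shows "norm (z powr (-s)) \<le> exp (R*(pi/2)) * (a0 powr (-R) + (2*R+1) powr R * exp (norm z / 2))"
proof -
  have R0: "0 \<le> R" using assms by linarith
  have nz: "a0 \<le> norm z" using assms abs_Re_le_cmod[of z] by linarith
  have zpos: "0 < norm z" using nz assms by linarith
  have P: "norm z powr (- Re s) \<le> a0 powr (-R) + (2*R+1) powr R * exp (norm z / 2)"
  proof (cases "norm z \<ge> 1")
    case True
    have "norm z powr (- Re s) \<le> norm z powr R"
      using True assms by (intro powr_mono) auto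
    also have "\<dots> \<le> (2*R+1) powr R * exp (norm z / 2)"
      using powr_le_exp_half[OF zpos R0] .
    finally show ?thesis by (smt (verit) powr_ge_zero)
  next
    case False
    have "norm z powr (- Re s) \<le> norm z powr (-R)"
      using False assms zpos by (intro powr_mono') auto
    also have "\<dots> \<le> a0 powr (-R)"
      using nz assms R0 by (intro powr_mono2') auto
    finally show ?thesis by (smt (verit) exp_gt_zero mult_nonneg_nonneg powr_ge_zero)
  qed
  have "norm (z powr (-s)) \<le> norm z powr (- Re s) * exp (\<bar>Im s\<bar> * (pi/2))"
    using norm_powr_bound1 assms by (meson dual_order.trans less_imp_le)
  also have "\<dots> \<le> (a0 powr (-R) + (2*R+1) powr R * exp (norm z / 2)) * exp (R * (pi/2))"
    using assms P by (intro mult_mono) auto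
  finally show ?thesis by (simp add: mult.commute)
qed

lemma exp_abs_integrable: "(\<lambda>t::real. exp (- \<bar>t\<bar>)) integrable_on UNIV"
proof -
  have "(\<lambda>x::real. exp (-1*x)) integrable_on {0..}"
    by (rule integrable_on_exp_minus_to_infinity) simp
  hence i1: "(\<lambda>t::real. exp (- \<bar>t\<bar>)) integrable_on {0..}"
    by (rule integrable_eq) simp
  have "(\<lambda>t::real. exp (- \<bar>t\<bar>)) absolutely_integrable_on {0..}"
    by (rule nonnegative_absolutely_integrable_1[OF i1]) simp
  hence "(\<lambda>t::real. exp (- \<bar>- t\<bar>)) absolutely_integrable_on {0..}" by simp
  hence "(\<lambda>t::real. exp (- \<bar>t\<bar>)) absolutely_integrable_on {..0}"
    using has_absolute_integral_reflect_real[of "{0..}" "{..0::real}" "\<lambda>t. exp (- \<bar>t\<bar>)"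
        "integral {0..} (\<lambda>t. exp (- \<bar>- t\<bar>))"]
    by (auto simp: image_iff)
  hence i2: "(\<lambda>t::real. exp (- \<bar>t\<bar>)) integrable_on {..0}"
    using absolutely_integrable_on_def by blast
  have "(\<lambda>t::real. exp (- \<bar>t\<bar>)) integrable_on ({..0} \<union> {0..})"
    by (rule integrable_Un[OF _ i2 i1]) (auto intro: negligible_subset[of "{0}"])
  moreover have "{..0::real} \<union> {0..} = UNIV" by auto
  ultimately show ?thesis by simp
qed

definition gg :: "complex \<Rightarrow> complex \<Rightarrow> complex" where
  "gg s z = z powr (-s) / sin (of_real pi * z)"

definition Kline :: "real \<Rightarrow> real \<Rightarrow> real" where
  "Kline a R = 2 * exp (R*(pi/2)) / \<bar>sin (pi*a)\<bar> * (a powr (-R) + (2*R+1) powr R * exp (a/2))"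

lemma sin_pi_nonint: "(a::real) \<notin> \<int> \<Longrightarrow> sin (pi * a) \<noteq> 0"
  by (auto simp: sin_zero_iff_int2 mult.commute)

lemma sin_line_nz:
  assumes "(a::real) \<notin> \<int>"
  shows "sin (of_real pi * (of_real a + \<i> * of_real t)) \<noteq> 0"
proof
  assume "sin (of_real pi * (of_real a + \<i> * of_real t)) = 0"
  then obtain n :: int where n: "of_real pi * (of_real a + \<i> * of_real t) = of_real (n * pi)"
    by (auto simp: sin_eq_0)
  hence "Re (of_real pi * (of_real a + \<i> * of_real t)) = Re (of_real (n * pi))" by simp
  hence "pi * a = n * pi" by simp
  hence "a = n" by simp
  thus False using assms by simp
qed

lemma line_bound:
  fixes s :: complex and a R t :: real
  assumes "0 < a" "a \<notin> \<int>" "\<bar>Re s\<bar> \<le> R" "\<bar>Im s\<bar> \<le> R"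
  shows "norm (gg s (of_real a + \<i> * of_real t)) \<le> Kline a R * exp (- \<bar>t\<bar>)"
proof -
  define z where "z = of_real a + \<i> * of_real t"
  have Rz: "Re z = a" and Iz: "Im z = t" by (simp_all add: z_def)
  define E where "E = exp (R*(pi/2))"
  define A where "A = a powr (-R)"
  define B where "B = (2*R+1) powr R * exp (a/2)"
  define X where "X = exp (pi * \<bar>t\<bar>)"
  define sa where "sa = \<bar>sin (pi*a)\<bar>"
  have R0: "0 \<le> R" using assms by linarith
  have sa0: "0 < sa" using sin_pi_nonint[OF assms(2)] by (simp add: sa_def)
  have E0: "0 < E" "0 \<le> A" "0 \<le> B" "0 < X" by (auto simp: E_def A_def B_def X_def)
  have nz: "norm z \<le> a + \<bar>t\<bar>" using cmod_le[of z] Rz Iz assms by simp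
  have num: "norm (z powr (-s)) \<le> E * (A + B * exp (\<bar>t\<bar>/2))"
  proof -
    have "norm (z powr (-s)) \<le> E * (A + (2*R+1) powr R * exp (norm z / 2))"
      using norm_powr_master[of a z s R] assms Rz by (simp add: E_def A_def)
    also have "exp (norm z / 2) \<le> exp (a/2) * exp (\<bar>t\<bar>/2)"
      using nz by (simp add: exp_add[symmetric] add_divide_distrib)
    hence "E * (A + (2*R+1) powr R * exp (norm z / 2)) \<le> E * (A + B * exp (\<bar>t\<bar>/2))"
      using E0 by (auto simp: B_def mult.assoc intro!: mult_left_mono)
    finally show ?thesis .
  qed
  have den: "sa * (X / 2) \<le> norm (sin (of_real pi * z))"
  proof -
    have "sa * ((exp (pi*t) + exp (- (pi*t))) / 2) \<le> norm (sin (of_real pi * z))"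
      using sin_lower1[of "of_real pi * z"] Rz Iz by (simp add: sa_def)
    moreover have "X \<le> exp (pi*t) + exp (- (pi*t))"
      by (cases "t \<ge> 0") (auto simp: X_def add_nonneg_pos add_pos_nonneg)
    hence "sa * (X / 2) \<le> sa * ((exp (pi*t) + exp (- (pi*t))) / 2)"
      using sa0 by (intro mult_left_mono divide_right_mono) auto
    ultimately show ?thesis by linarith
  qed
  have den0: "0 < sa * (X / 2)" using sa0 E0 by simp
  have "norm (gg s z) = norm (z powr (-s)) / norm (sin (of_real pi * z))"
    by (simp add: gg_def norm_divide)
  also have "\<dots> \<le> E * (A + B * exp (\<bar>t\<bar>/2)) / (sa * (X / 2))"
    by (rule frac_le) (use num den den0 E0 in auto)
  also have "\<dots> = 2 * E / sa * (A / X + B * (exp (\<bar>t\<bar>/2) / X))"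
    using sa0 E0 by (simp add: field_simps)
  also have "\<dots> \<le> 2 * E / sa * (A * exp (- \<bar>t\<bar>) + B * exp (- \<bar>t\<bar>))"
  proof -
    have pt: "\<bar>t\<bar> \<le> pi * \<bar>t\<bar>" using pi_gt3 mult_right_mono[of 1 pi "\<bar>t\<bar>"] by simp
    have "1 / X = exp (- (pi * \<bar>t\<bar>))" by (simp add: X_def exp_minus field_simps)
    also have "\<dots> \<le> exp (- \<bar>t\<bar>)" using pt by simp
    finally have "1 / X \<le> exp (- \<bar>t\<bar>)" .
    hence 1: "A / X \<le> A * exp (- \<bar>t\<bar>)" using E0
      by (metis mult_left_mono times_divide_eq_right mult.right_neutral)
    have "exp (\<bar>t\<bar>/2) / X = exp (\<bar>t\<bar>/2 - pi * \<bar>t\<bar>)" by (simp add: X_def exp_diff)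
    also have "\<dots> \<le> exp (- \<bar>t\<bar>)"
    proof -
      have "3/2 * \<bar>t\<bar> \<le> pi * \<bar>t\<bar>" using pi_gt3 by (intro mult_right_mono) auto
      thus ?thesis by simp
    qed
    finally have 2: "B * (exp (\<bar>t\<bar>/2) / X) \<le> B * exp (- \<bar>t\<bar>)"
      using E0 by (intro mult_left_mono) auto
    show ?thesis using 1 2 E0 sa0 by (intro mult_left_mono) auto
  qed
  also have "\<dots> = Kline a R * exp (- \<bar>t\<bar>)"
    by (simp add: Kline_def E_def A_def B_def sa_def algebra_simps)
  finally show ?thesis by (simp add: z_def)
qed

lemma gg_line_cont:
  assumes "0 < a" "a \<notin> \<int>"
  shows "continuous_on UNIV (\<lambda>t::real. gg s (of_real a + \<i> * of_real t))"
  unfolding gg_def using assms sin_line_nz[OF assms(2)]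
  by (intro continuous_intros) (auto simp: complex_eq_iff)

lemma Kexp_integrable: "(\<lambda>t::real. K * exp (- \<bar>t\<bar>)) integrable_on UNIV"
  using integrable_cmul[OF exp_abs_integrable, of K] by simp

lemma line_integrable_bound:
  assumes "0 < a" "a \<notin> \<int>" "\<And>t. norm (f t) \<le> h t" "h integrable_on UNIV"
    "continuous_on UNIV (f :: real \<Rightarrow> complex)"
  shows "f integrable_on UNIV"
proof (rule measurable_bounded_by_integrable_imp_integrable[OF _ assms(4)])
  show "f \<in> borel_measurable (lebesgue_on UNIV)"
    by (rule continuous_imp_measurable_on_sets_lebesgue[OF assms(5)]) simp
qed (use assms in auto)

lemma line_integrable:
  assumes "0 < a" "a \<notin> \<int>"
  shows "(\<lambda>t::real. gg s (of_real a + \<i> * of_real t)) integrable_on UNIV"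
proof -
  define R where "R = max \<bar>Re s\<bar> \<bar>Im s\<bar>"
  show ?thesis
    by (rule line_integrable_bound[OF assms _ Kexp_integrable gg_line_cont[OF assms]])
       (use line_bound[OF assms, of s R] in \<open>simp add: R_def\<close>)
qed

lemma trunc_lim:
  fixes f :: "real \<Rightarrow> complex"
  assumes f: "f integrable_on UNIV" and h: "h integrable_on UNIV" and b: "\<And>t. norm (f t) \<le> h t"
  shows "(\<lambda>k. integral {-real k..real k} f) \<longlonglongrightarrow> integral UNIV f"
proof -
  define F where "F k = (\<lambda>t. if t \<in> {-real k..real k} then f t else 0)" for k :: nat
  have "(\<lambda>k. integral UNIV (F k)) \<longlonglongrightarrow> integral UNIV f"
  proof (rule dominated_convergence(2)[OF _ h])
    show "F k integrable_on UNIV" for k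
      unfolding F_def integrable_restrict_UNIV by (rule integrable_on_subinterval[OF f]) auto
    show "norm (F k t) \<le> h t" for k t
      using b[of t] order_trans[OF norm_ge_zero b[of t]] by (auto simp: F_def)
    show "(\<lambda>k. F k t) \<longlonglongrightarrow> f t" for t
    proof (rule tendsto_eventually)
      obtain n :: nat where "\<bar>t\<bar> \<le> real n" using real_arch_simple by blast
      hence "\<forall>k\<ge>n. F k t = f t" by (auto simp: F_def)
      thus "\<forall>\<^sub>F k in sequentially. F k t = f t" by (auto simp: eventually_sequentially)
    qed
  qed
  thus ?thesis by (simp only: F_def integral_restrict_UNIV)
qed

lemma tail_lim:
  fixes h :: "real \<Rightarrow> real"
  assumes h: "h integrable_on UNIV" and h0: "\<And>t. 0 \<le> h t"
  shows "(\<lambda>k. integral UNIV (\<lambda>t. if t \<in> {-real k..real k} then 0 else h t)) \<longlonglongrightarrow> 0"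
proof -
  define F where "F k = (\<lambda>t. if t \<in> {-real k..real k} then 0 else h t)" for k :: nat
  have "(\<lambda>k. integral UNIV (F k)) \<longlonglongrightarrow> integral (UNIV::real set) (\<lambda>_. 0::real)"
  proof (rule dominated_convergence(2)[where f=F and g="\<lambda>_. 0" and S=UNIV and h=h])
    show "F k integrable_on UNIV" for k
    proof -
      have "(\<lambda>t. if t \<in> {-real k..real k} then h t else 0) integrable_on UNIV"
        unfolding integrable_restrict_UNIV by (rule integrable_on_subinterval[OF h]) auto
      from integrable_diff[OF h this] show "F k integrable_on UNIV"
        by (rule integrable_eq) (auto simp: F_def)
    qed
    show "norm (F k t) \<le> h t" for k t
      using h0[of t] by (auto simp: F_def)
    show "(\<lambda>k. F k t) \<longlonglongrightarrow> 0" for t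
    proof (rule tendsto_eventually)
      obtain n :: nat where "\<bar>t\<bar> \<le> real n" using real_arch_simple by blast
      hence "\<forall>k\<ge>n. F k t = 0" by (auto simp: F_def)
      thus "\<forall>\<^sub>F k in sequentially. F k t = 0" by (auto simp: eventually_sequentially)
    qed
  qed (rule h)
  thus ?thesis by (simp add: F_def)
qed

lemma gg_deriv:
  assumes "z \<noteq> 0" "sin (of_real pi * z) \<noteq> 0"
  shows "((\<lambda>s. gg s z) has_field_derivative (- Ln z * gg s z)) (at s within U)"
proof -
  have "gg s' z = exp (- s' * Ln z) / sin (of_real pi * z)" for s'
    using assms by (simp add: gg_def powr_def)
  hence e: "(\<lambda>s. gg s z) = (\<lambda>s. exp (- s * Ln z) / sin (of_real pi * z))" by auto
  show ?thesis unfolding e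
    by (rule derivative_eq_intros refl | simp add: assms)+ (simp add: gg_def powr_def assms field_simps)
qed

lemma compl_integrable:
  fixes f :: "real \<Rightarrow> 'b::banach"
  assumes f: "f integrable_on UNIV"
  shows "(\<lambda>t. if t \<in> {-real k..real k} then 0 else f t) integrable_on UNIV"
proof -
  have "(\<lambda>t. if t \<in> {-real k..real k} then f t else 0) integrable_on UNIV"
    unfolding integrable_restrict_UNIV by (rule integrable_on_subinterval[OF f]) auto
  from integrable_diff[OF f this] show ?thesis
    by (rule integrable_eq) auto
qed

lemma compl_integral:
  fixes f :: "real \<Rightarrow> 'b::banach"
  assumes f: "f integrable_on UNIV"
  shows "integral UNIV f - integral {-real k..real k} f =
         integral UNIV (\<lambda>t. if t \<in> {-real k..real k} then 0 else f t)"
proof -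
  have i: "(\<lambda>t. if t \<in> {-real k..real k} then f t else 0) integrable_on UNIV"
    unfolding integrable_restrict_UNIV by (rule integrable_on_subinterval[OF f]) auto
  have "integral UNIV f - integral {-real k..real k} f =
        integral UNIV f - integral UNIV (\<lambda>t. if t \<in> {-real k..real k} then f t else 0)"
    by (simp only: integral_restrict_UNIV)
  also have "\<dots> = integral UNIV (\<lambda>t. f t - (if t \<in> {-real k..real k} then f t else 0))"
    by (rule integral_diff[OF f i, symmetric])
  also have "(\<lambda>t. f t - (if t \<in> {-real k..real k} then f t else 0)) =
             (\<lambda>t. if t \<in> {-real k..real k} then 0 else f t)" by auto
  finally show ?thesis .
qed

lemma line_holo:
  assumes a: "0 < a" "a \<notin> \<int>"
  shows "(\<lambda>s. integral UNIV (\<lambda>t. gg s (of_real a + \<i> * of_real t))) holomorphic_on UNIV"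
proof -
  define z where "z t = of_real a + \<i> * of_real t" for t :: real
  define L where "L s = integral UNIV (\<lambda>t. gg s (z t))" for s
  have zne: "z t \<noteq> 0" for t using a by (auto simp: z_def complex_eq_iff)
  have sne: "sin (of_real pi * z t) \<noteq> 0" for t using sin_line_nz[OF a(2)] by (simp add: z_def)
  have ball: "L holomorphic_on ball 0 r" if r: "r > 0" for r
  proof -
    define h where "h t = Kline a r * exp (- \<bar>t\<bar>)" for t
    define F where "F k s = integral {-real k..real k} (\<lambda>t. gg s (z t))" for k :: nat and s
    have hi: "h integrable_on UNIV" unfolding h_def by (rule Kexp_integrable)
    have hb: "norm (gg s (z t)) \<le> h t" if "s \<in> cball 0 r" for s t
    proof -
      have "norm s \<le> r" using that by simp
      hence "\<bar>Re s\<bar> \<le> r" "\<bar>Im s\<bar> \<le> r" using abs_Re_le_cmod abs_Im_le_cmod order_trans by blast+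
      thus ?thesis using line_bound[OF a, of s r t] by (simp add: h_def z_def)
    qed
    have h0: "0 \<le> h t" for t using hb[of 0 t] r by (meson centre_in_cball less_imp_le norm_ge_zero order_trans)
    have Fholo: "F k holomorphic_on UNIV" for k
    proof -
      have "(\<lambda>s. integral (cbox (-real k) (real k)) (\<lambda>t. gg s (z t))) holomorphic_on UNIV"
      proof (rule leibniz_rule_holomorphic[where fx="\<lambda>s t. - Ln (z t) * gg s (z t)"])
        show "((\<lambda>s. gg s (z t)) has_field_derivative - Ln (z t) * gg s (z t)) (at s within UNIV)" for s t
          by (rule gg_deriv[OF zne sne])
        show "(\<lambda>t. gg s (z t)) integrable_on cbox (- real k) (real k)" for s
          using integrable_on_subinterval[OF line_integrable[OF a, of s], of "-real k" "real k"]
          by (simp add: z_def)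
        show "continuous_on (UNIV \<times> cbox (- real k) (real k)) (\<lambda>(s, t). - Ln (z t) * gg s (z t))"
          unfolding gg_def z_def case_prod_unfold using a sne zne
          by (intro continuous_intros) (auto simp: z_def complex_eq_iff complex_nonpos_Reals_iff)
      qed auto
      thus ?thesis by (simp add: F_def[abs_def])
    qed
    have unif: "uniform_limit (cball 0 r) F L sequentially"
      unfolding uniform_limit_iff
    proof (intro allI impI)
      fix e :: real assume e: "e > 0"
      define T where "T k = integral UNIV (\<lambda>t. if t \<in> {-real k..real k} then 0 else h t)" for k :: nat
      have "T \<longlonglongrightarrow> 0" unfolding T_def by (rule tail_lim[OF hi h0])
      hence ev: "\<forall>\<^sub>F k in sequentially. T k < e" using e by (simp add: order_tendstoD)
      show "\<forall>\<^sub>F k in sequentially. \<forall>s\<in>cball 0 r. dist (F k s) (L s) < e"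
        using ev
      proof eventually_elim
        case (elim k)
        show ?case
        proof
          fix s :: complex assume s: "s \<in> cball 0 r"
          have gi: "(\<lambda>t. gg s (z t)) integrable_on UNIV"
            using line_integrable[OF a, of s] by (simp add: z_def)
          have "dist (F k s) (L s) = norm (L s - F k s)" by (simp add: dist_norm norm_minus_commute)
          also have "L s - F k s = integral UNIV (\<lambda>t. if t \<in> {-real k..real k} then 0 else gg s (z t))"
            unfolding L_def F_def by (rule compl_integral[OF gi])
          also have "norm \<dots> \<le> T k"
            unfolding T_def
            by (rule integral_norm_bound_integral[OF compl_integrable[OF gi] compl_integrable[OF hi]])
               (use hb[OF s] in auto)
          finally show "dist (F k s) (L s) < e" using elim by simp
        qed
      qed
    qed
    obtain "continuous_on (cball 0 r) L" "L holomorphic_on ball 0 r"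
    proof (rule holomorphic_uniform_limit[OF _ unif])
      show "\<forall>\<^sub>F n in sequentially. continuous_on (cball 0 r) (F n) \<and> F n holomorphic_on ball 0 r"
        using Fholo by (intro always_eventually allI conjI)
          (auto intro: holomorphic_on_subset[of _ UNIV] holomorphic_on_imp_continuous_on)
    qed auto
    thus ?thesis by simp
  qed
  have "L holomorphic_on UNIV"
    unfolding holomorphic_on_def
  proof
    fix x :: complex
    have "L holomorphic_on ball 0 (norm x + 1)" by (rule ball) (simp add: add_nonneg_pos)
    moreover have "x \<in> ball 0 (norm x + 1)" by simp
    ultimately have "L field_differentiable at x"
      using holomorphic_on_open open_ball field_differentiable_def by blast
    thus "L field_differentiable at x within UNIV" by simp
  qed
  thus ?thesis by (simp add: L_def[abs_def] z_def)
qed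

lemma cos_pi_nat: "cos (of_real pi * of_nat n :: complex) = (-1) ^ n"
proof -
  have "cos (of_real pi * of_nat n :: complex) = of_real (cos (real n * pi))"
    by (simp add: cos_of_real[symmetric] mult.commute)
  thus ?thesis by simp
qed

lemma residue_gg:
  assumes "n \<ge> 1"
  shows "residue (gg s) (of_nat n) = of_nat n powr (-s) / (of_real pi * (-1) ^ n)"
proof -
  have "residue (\<lambda>w. w powr (-s) / sin (of_real pi * w)) (of_nat n) =
        of_nat n powr (-s) / (of_real pi * cos (of_real pi * of_nat n))"
  proof (rule residue_simple_pole_deriv[where s="{w. Re w > 0}"])
    show "(\<lambda>w. w powr - s) holomorphic_on {w. 0 < Re w}"
      by (intro holomorphic_intros) (auto simp: complex_nonpos_Reals_iff)
    show "(\<lambda>w. sin (complex_of_real pi * w)) holomorphic_on {w. 0 < Re w}"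
      by (intro holomorphic_intros)
    show "open {w. 0 < Re w}" using open_halfspace_Re_gt by simp
    show "connected {w. 0 < Re w}" by (rule convex_connected) (rule convex_halfspace_Re_gt)
    show "of_nat n \<in> {w. 0 < Re w}" using assms by simp
    show "((\<lambda>w. sin (complex_of_real pi * w)) has_field_derivative
           of_real pi * cos (of_real pi * of_nat n)) (at (of_nat n))"
      by (rule derivative_eq_intros refl | simp)+
    show "of_nat n powr - s \<noteq> 0" using assms by (simp add: powr_def)
    show "sin (complex_of_real pi * of_nat n) = 0"
      by (simp add: sin_eq_0) (metis of_int_of_nat_eq mult.commute)
    show "of_real pi * cos (complex_of_real pi * of_nat n) \<noteq> 0"
      by (simp add: cos_pi_nat)
  qed
  thus ?thesis by (simp add: gg_def[abs_def] cos_pi_nat)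
qed

lemma rect_residue:
  assumes c: "0 < c" "c < 1" and T: "0 < T" and N: "N \<ge> 1"
  shows "contour_integral (rectpath (Complex c (-T)) (Complex (real N + 1/2) T)) (gg s) =
         2 * \<i> * (\<Sum>n=1..N. (-1) ^ n * of_nat n powr (-s))"
proof -
  define a1 where "a1 = Complex c (-T)"
  define a3 where "a3 = Complex (real N + 1/2) T"
  define S where "S = {w. 0 < Re w} \<inter> {w. Re w < real N + 1}"
  define pts where "pts = (of_nat :: nat \<Rightarrow> complex) ` {1..N}"
  have le: "Re a1 \<le> Re a3" "Im a1 \<le> Im a3" using c T N by (auto simp: a1_def a3_def)
  have cb: "cbox a1 a3 \<subseteq> S" using c by (auto simp: in_cbox_complex_iff a1_def a3_def S_def)
  have ptsbox: "p \<in> box a1 a3" if "p \<in> pts" for p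
    using that c T by (auto simp: pts_def in_box_complex_iff a1_def a3_def)
  have "contour_integral (rectpath a1 a3) (gg s) =
        2 * pi * \<i> * (\<Sum>p\<in>pts. winding_number (rectpath a1 a3) p * residue (gg s) p)"
  proof (rule Residue_theorem)
    show "open S" unfolding S_def by (intro open_Int open_halfspace_Re_gt open_halfspace_Re_lt)
    show "connected S" unfolding S_def
      by (intro convex_connected convex_Int convex_halfspace_Re_gt convex_halfspace_Re_lt)
    show "finite pts" by (simp add: pts_def)
    show "gg s holomorphic_on S - pts"
      unfolding gg_def[abs_def]
    proof (intro holomorphic_intros)
      fix w assume w: "w \<in> S - pts"
      thus "w \<notin> \<real>\<^sub>\<le>\<^sub>0" by (auto simp: S_def complex_nonpos_Reals_iff)
      show "sin (complex_of_real pi * w) \<noteq> 0"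
      proof
        assume "sin (complex_of_real pi * w) = 0"
        then obtain m :: int where m: "of_real pi * w = of_real (m * pi)" by (auto simp: sin_eq_0)
        hence wm: "w = of_int m" by (simp add: complex_eq_iff)
        have "0 < m" "m < int N + 1" using w wm by (auto simp: S_def)
        hence "nat m \<in> {1..N}" by auto
        hence "w \<in> pts" using wm \<open>0 < m\<close> unfolding pts_def by (auto intro!: image_eqI[of _ _ "nat m"])
        thus False using w by simp
      qed
    qed
    show "valid_path (rectpath a1 a3)" by simp
    show "pathfinish (rectpath a1 a3) = pathstart (rectpath a1 a3)" by simp
    show "path_image (rectpath a1 a3) \<subseteq> S - pts"
      using cb ptsbox path_image_rectpath_cbox_minus_box[OF le] by auto
    show "\<forall>z. z \<notin> S \<longrightarrow> winding_number (rectpath a1 a3) z = 0"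
      using cb winding_number_rectpath_outside[OF le] by auto
  qed
  also have "(\<Sum>p\<in>pts. winding_number (rectpath a1 a3) p * residue (gg s) p) =
             (\<Sum>n=1..N. residue (gg s) (of_nat n))"
    unfolding pts_def
    by (subst sum.reindex) (auto simp: inj_on_def winding_number_rectpath ptsbox pts_def)
  also have "\<dots> = (\<Sum>n=1..N. of_nat n powr (-s) / (of_real pi * (-1) ^ n))"
    by (intro sum.cong refl residue_gg) auto
  finally have "contour_integral (rectpath a1 a3) (gg s) =
       2 * pi * \<i> * (\<Sum>n=1..N. of_nat n powr (-s) / (of_real pi * (-1) ^ n))" .
  also have "\<dots> = 2 * \<i> * (\<Sum>n=1..N. (-1) ^ n * of_nat n powr (-s))"
  proof -
    have "2 * pi * \<i> * (of_nat n powr (-s) / (of_real pi * (-1) ^ n)) =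
          2 * \<i> * ((-1) ^ n * of_nat n powr (-s))" for n :: nat
      by (cases "even n") (auto simp: field_simps)
    thus ?thesis by (simp add: sum_distrib_left)
  qed
  finally show ?thesis by (simp add: a1_def a3_def)
qed

lemma sin_nz:
  assumes "Im w \<noteq> 0 \<or> Re w \<notin> \<int>"
  shows "sin (of_real pi * w) \<noteq> 0"
proof
  assume "sin (of_real pi * w) = 0"
  then obtain m :: int where m: "of_real pi * w = of_real (m * pi)" by (auto simp: sin_eq_0)
  hence "w = of_int m" by (simp add: complex_eq_iff)
  thus False using assms by simp
qed

lemma gg_cont_on:
  assumes "\<And>w. w \<in> A \<Longrightarrow> 0 < Re w \<and> (Im w \<noteq> 0 \<or> Re w \<notin> \<int>)"
  shows "continuous_on A (gg s)"
  unfolding gg_def[abs_def] using sin_nz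
  by (intro continuous_intros) (auto simp: complex_nonpos_Reals_iff dest!: assms)

definition HB :: "real \<Rightarrow> real \<Rightarrow> real \<Rightarrow> real \<Rightarrow> real" where
  "HB R c b T = exp (R*(pi/2)) * (c powr (-R) + (2*R+1) powr R * exp ((b+T)/2)) /
                ((exp (pi*T) - exp (- (pi*T)))/2)"

lemma HB_lim: "(\<lambda>k::nat. HB R c b (real k)) \<longlonglongrightarrow> 0"
proof -
  have "((\<lambda>T. HB R c b T) \<longlongrightarrow> 0) at_top"
    unfolding HB_def using pi_gt3 by real_asymp
  thus ?thesis using filterlim_compose filterlim_real_sequentially by blast
qed

lemma horiz_bound:
  assumes "0 < c" "c \<le> Re w" "Re w \<le> b" "\<bar>Im w\<bar> = T" "0 < T" "\<bar>Re s\<bar> \<le> R" "\<bar>Im s\<bar> \<le> R"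
  shows "norm (gg s w) \<le> HB R c b T"
proof -
  define E where "E = exp (R*(pi/2))"
  define A where "A = c powr (-R)"
  define K where "K = (2*R+1) powr R"
  have E0: "0 < E" "0 \<le> A" "0 \<le> K" by (auto simp: E_def A_def K_def)
  have nw: "norm w \<le> b + T" using cmod_le[of w] assms by simp
  have num: "norm (w powr (-s)) \<le> E * (A + K * exp ((b+T)/2))"
  proof -
    have "norm (w powr (-s)) \<le> E * (A + K * exp (norm w / 2))"
      using norm_powr_master[of c w s R] assms by (simp add: E_def A_def K_def)
    also have "\<dots> \<le> E * (A + K * exp ((b+T)/2))"
      using nw E0 by (intro mult_left_mono add_left_mono) auto
    finally show ?thesis .
  qed
  have dpos: "0 < (exp (pi*T) - exp (- (pi*T)))/2" using assms by simp
  have den: "(exp (pi*T) - exp (- (pi*T)))/2 \<le> norm (sin (of_real pi * w))"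
  proof -
    have "\<bar>exp (pi * Im w) - exp (- (pi * Im w))\<bar> = exp (pi*T) - exp (- (pi*T))"
      using assms dpos by (cases "Im w \<ge> 0") (auto simp: abs_if mult_less_0_iff)
    thus ?thesis using sin_lower2[of "of_real pi * w"] by simp
  qed
  have "norm (gg s w) = norm (w powr (-s)) / norm (sin (of_real pi * w))"
    by (simp add: gg_def norm_divide)
  also have "\<dots> \<le> E * (A + K * exp ((b+T)/2)) / ((exp (pi*T) - exp (- (pi*T)))/2)"
    by (rule frac_le) (use num den dpos E0 in auto)
  finally show ?thesis by (simp add: HB_def E_def A_def K_def)
qed

lemma rect_decomp:
  assumes c: "0 < c" "c < b" "c \<notin> \<int>" "b \<notin> \<int>" and T: "0 < T"
  shows "contour_integral (rectpath (Complex c (-T)) (Complex b T)) (gg s) =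
         contour_integral (linepath (Complex c (-T)) (Complex b (-T))) (gg s)
       + \<i> * integral {-T..T} (\<lambda>t. gg s (of_real b + \<i> * of_real t))
       + contour_integral (linepath (Complex b T) (Complex c T)) (gg s)
       - \<i> * integral {-T..T} (\<lambda>t. gg s (of_real c + \<i> * of_real t))"
proof -
  define a1 where "a1 = Complex c (-T)"
  define a2 where "a2 = Complex b (-T)"
  define a3 where "a3 = Complex b T"
  define a4 where "a4 = Complex c T"
  have rp: "rectpath a1 a3 = linepath a1 a2 +++ linepath a2 a3 +++ linepath a3 a4 +++ linepath a4 a1"
    by (simp add: rectpath_def Let_def a1_def a2_def a3_def a4_def)
  have cu: "c \<le> x \<Longrightarrow> x \<le> b \<Longrightarrow> 0 < x" for x using c by linarith
  have c12: "continuous_on (closed_segment a1 a2) (gg s)"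
    by (rule gg_cont_on) (use c T in \<open>auto simp: a1_def a2_def closed_segment_same_Im closed_segment_eq_real_ivl\<close>)
  have c23: "continuous_on (closed_segment a2 a3) (gg s)"
    by (rule gg_cont_on) (use c T in \<open>auto simp: a2_def a3_def closed_segment_same_Re closed_segment_eq_real_ivl\<close>)
  have c34: "continuous_on (closed_segment a3 a4) (gg s)"
    by (rule gg_cont_on) (use c T in \<open>auto simp: a3_def a4_def closed_segment_same_Im closed_segment_eq_real_ivl\<close>)
  have c41: "continuous_on (closed_segment a4 a1) (gg s)"
    by (rule gg_cont_on) (use c T in \<open>auto simp: a4_def a1_def closed_segment_same_Re closed_segment_eq_real_ivl\<close>)
  note ints = contour_integrable_continuous_linepath[OF c12] contour_integrable_continuous_linepath[OF c23]
              contour_integrable_continuous_linepath[OF c34] contour_integrable_continuous_linepath[OF c41]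
  have "contour_integral (rectpath a1 a3) (gg s) =
        contour_integral (linepath a1 a2) (gg s) + contour_integral (linepath a2 a3) (gg s) +
        contour_integral (linepath a3 a4) (gg s) + contour_integral (linepath a4 a1) (gg s)"
    unfolding rp by (simp add: ints contour_integrable_joinI valid_path_join)
  moreover have "contour_integral (linepath a2 a3) (gg s) = \<i> * integral {-T..T} (\<lambda>x. gg s (Complex b x))"
    by (rule contour_integral_linepath_same_Re) (use T in \<open>auto simp: a2_def a3_def\<close>)
  moreover have "contour_integral (linepath a4 a1) (gg s) = - contour_integral (linepath a1 a4) (gg s)"
    by (rule contour_integral_reverse_linepath[OF c41])
  moreover have "contour_integral (linepath a1 a4) (gg s) = \<i> * integral {-T..T} (\<lambda>x. gg s (Complex c x))"
    by (rule contour_integral_linepath_same_Re) (use T in \<open>auto simp: a1_def a4_def\<close>)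
  ultimately show ?thesis by (simp add: a1_def a2_def a3_def a4_def Complex_eq)
qed

lemma horiz_seg_bound:
  assumes "0 < c" "c \<le> x1" "x1 \<le> b" "c \<le> x2" "x2 \<le> b" "\<bar>y\<bar> = T" "0 < T"
          "\<bar>Re s\<bar> \<le> R" "\<bar>Im s\<bar> \<le> R"
  shows "norm (contour_integral (linepath (Complex x1 y) (Complex x2 y)) (gg s)) \<le> HB R c b T * \<bar>x2 - x1\<bar>"
proof -
  have seg: "w \<in> closed_segment (Complex x1 y) (Complex x2 y) \<Longrightarrow> c \<le> Re w \<and> Re w \<le> b \<and> Im w = y" for w
    using assms by (auto simp: closed_segment_same_Im closed_segment_eq_real_ivl split: if_splits)
  have cont: "continuous_on (closed_segment (Complex x1 y) (Complex x2 y)) (gg s)"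
    by (rule gg_cont_on) (use seg assms in force)
  have hb: "norm (gg s w) \<le> HB R c b T" if "w \<in> closed_segment (Complex x1 y) (Complex x2 y)" for w
    using seg[OF that] assms by (intro horiz_bound) auto
  have "0 \<le> HB R c b T"
    using hb[of "Complex x1 y"] by (meson ends_in_segment(1) norm_ge_zero order_trans)
  hence "norm (contour_integral (linepath (Complex x1 y) (Complex x2 y)) (gg s)) \<le>
         HB R c b T * norm (Complex x2 y - Complex x1 y)"
    by (intro contour_integral_bound_linepath contour_integrable_continuous_linepath[OF cont] hb)
  also have "norm (Complex x2 y - Complex x1 y) = \<bar>x2 - x1\<bar>"
    by (simp add: Complex_eq) (metis of_real_diff norm_of_real)
  finally show ?thesis .
qed

lemma half_nonint: "real N + 1/2 \<notin> \<int>"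
proof
  assume "real N + 1/2 \<in> \<int>"
  then obtain m :: int where "real N + 1/2 = of_int m" by (auto elim: Ints_cases)
  hence "2 * (of_int m - real N) = (1::real)" by simp
  hence "of_int (2 * (m - int N)) = (1::real)" by simp
  hence "2 * (m - int N) = 1" using of_int_eq_1_iff by blast
  thus False by presburger
qed

lemma unit_nonint: "0 < (c::real) \<Longrightarrow> c < 1 \<Longrightarrow> c \<notin> \<int>"
  by (auto elim!: Ints_cases)

lemma line_diff:
  assumes c: "0 < c" "c < 1" and N: "N \<ge> 1"
  shows "integral UNIV (\<lambda>t. gg s (of_real (real N + 1/2) + \<i> * of_real t))
       - integral UNIV (\<lambda>t. gg s (of_real c + \<i> * of_real t))
       = 2 * (\<Sum>n=1..N. (-1) ^ n * of_nat n powr (-s))"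
proof -
  define b where "b = real N + 1/2"
  define R where "R = max \<bar>Re s\<bar> \<bar>Im s\<bar>"
  have Rs: "\<bar>Re s\<bar> \<le> R" "\<bar>Im s\<bar> \<le> R" by (auto simp: R_def)
  have cb: "c < b" using c N by (simp add: b_def)
  have cz: "c \<notin> \<int>" by (rule unit_nonint[OF c])
  have bz: "b \<notin> \<int>" unfolding b_def by (rule half_nonint)
  have b0: "0 < b" using cb c by linarith
  define Lb where "Lb = integral UNIV (\<lambda>t. gg s (of_real b + \<i> * of_real t))"
  define Lc where "Lc = integral UNIV (\<lambda>t. gg s (of_real c + \<i> * of_real t))"
  define Vb where "Vb k = integral {-real k..real k} (\<lambda>t. gg s (of_real b + \<i> * of_real t))" for k :: nat
  define Vc where "Vc k = integral {-real k..real k} (\<lambda>t. gg s (of_real c + \<i> * of_real t))" for k :: nat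
  define H1 where "H1 k = contour_integral (linepath (Complex c (- real k)) (Complex b (- real k))) (gg s)" for k :: nat
  define H3 where "H3 k = contour_integral (linepath (Complex b (real k)) (Complex c (real k))) (gg s)" for k :: nat
  define S where "S = 2 * \<i> * (\<Sum>n=1..N. (-1) ^ n * of_nat n powr (-s))"
  have eq: "S = H1 k + \<i> * Vb k + H3 k - \<i> * Vc k" if k: "k \<ge> 1" for k
  proof -
    have T: "0 < real k" using k by simp
    have "S = contour_integral (rectpath (Complex c (- real k)) (Complex b (real k))) (gg s)"
      unfolding S_def b_def by (rule rect_residue[OF c T N, symmetric])
    also have "\<dots> = H1 k + \<i> * Vb k + H3 k - \<i> * Vc k"
      unfolding H1_def H3_def Vb_def Vc_def
      by (rule rect_decomp[OF c(1) cb cz bz T])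
    finally show ?thesis .
  qed
  have limVb: "Vb \<longlonglongrightarrow> Lb" unfolding Vb_def Lb_def
    by (rule trunc_lim[OF line_integrable[OF b0 bz] Kexp_integrable line_bound[OF b0 bz Rs]])
  have limVc: "Vc \<longlonglongrightarrow> Lc" unfolding Vc_def Lc_def
    by (rule trunc_lim[OF line_integrable[OF c(1) cz] Kexp_integrable line_bound[OF c(1) cz Rs]])
  have hbl: "(\<lambda>k. HB R c b (real k) * (b - c)) \<longlonglongrightarrow> 0"
    using tendsto_mult_left_zero[OF HB_lim] .
  have limH1: "H1 \<longlonglongrightarrow> 0"
  proof (rule Lim_null_comparison[OF _ hbl])
    show "\<forall>\<^sub>F k in sequentially. norm (H1 k) \<le> HB R c b (real k) * (b - c)"
      using eventually_ge_at_top[of 1]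
    proof eventually_elim
      case (elim k)
      thus ?case unfolding H1_def
        using horiz_seg_bound[of c c b b "- real k" "real k" s R] c cb Rs by simp
    qed
  qed
  have limH3: "H3 \<longlonglongrightarrow> 0"
  proof (rule Lim_null_comparison[OF _ hbl])
    show "\<forall>\<^sub>F k in sequentially. norm (H3 k) \<le> HB R c b (real k) * (b - c)"
      using eventually_ge_at_top[of 1]
    proof eventually_elim
      case (elim k)
      thus ?case unfolding H3_def
        using horiz_seg_bound[of c b b c "real k" "real k" s R] c cb Rs by simp
    qed
  qed
  have l1: "(\<lambda>k. H1 k + \<i> * Vb k + H3 k - \<i> * Vc k) \<longlonglongrightarrow> 0 + \<i> * Lb + 0 - \<i> * Lc"
    by (intro tendsto_intros limH1 limH3 limVb limVc)
  have l2: "(\<lambda>k. H1 k + \<i> * Vb k + H3 k - \<i> * Vc k) \<longlonglongrightarrow> S"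
  proof (rule tendsto_eventually)
    show "\<forall>\<^sub>F k in sequentially. H1 k + \<i> * Vb k + H3 k - \<i> * Vc k = S"
      using eventually_ge_at_top[of 1] by eventually_elim (simp add: eq)
  qed
  have "\<i> * Lb - \<i> * Lc = S" using LIMSEQ_unique[OF l1 l2] by simp
  hence "\<i> * (Lb - Lc) = \<i> * (2 * (\<Sum>n=1..N. (-1) ^ n * of_nat n powr (-s)))"
    by (simp add: S_def algebra_simps)
  hence "Lb - Lc = 2 * (\<Sum>n=1..N. (-1) ^ n * of_nat n powr (-s))" by simp
  thus ?thesis by (simp add: Lb_def Lc_def b_def)
qed

lemma sin_half_odd: "\<bar>sin (pi * (real N + 1/2))\<bar> = 1"
proof -
  have "sin (pi * (real N + 1/2)) = sin (real N * pi + pi/2)" by (simp add: algebra_simps)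
  also have "\<dots> = cos (real N * pi)" by (simp add: sin_add)
  finally show ?thesis by simp
qed

lemma far_line_lim:
  assumes s: "0 < Re s"
  shows "(\<lambda>N. integral UNIV (\<lambda>t. gg s (of_real (real N + 1/2) + \<i> * of_real t))) \<longlonglongrightarrow> 0"
proof -
  define E where "E = exp (\<bar>Im s\<bar> * (pi/2))"
  define I0 where "I0 = integral UNIV (\<lambda>t::real. exp (- \<bar>t\<bar>))"
  define B where "B N = 2 * E * (real N + 1/2) powr (- Re s)" for N :: nat
  have bnd: "norm (integral UNIV (\<lambda>t. gg s (of_real (real N + 1/2) + \<i> * of_real t))) \<le> B N * I0" for N
  proof -
    define a where "a = real N + 1/2"
    have a0: "0 < a" by (simp add: a_def)
    have az: "a \<notin> \<int>" unfolding a_def by (rule half_nonint)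
    have pt: "norm (gg s (of_real a + \<i> * of_real t)) \<le> B N * exp (- \<bar>t\<bar>)" for t
    proof -
      define z where "z = of_real a + \<i> * of_real t"
      have Rz: "Re z = a" "Im z = t" by (simp_all add: z_def)
      have nz: "a \<le> norm z" using abs_Re_le_cmod[of z] Rz a0 by simp
      have num: "norm (z powr (-s)) \<le> a powr (- Re s) * E"
      proof -
        have "norm (z powr (-s)) \<le> norm z powr (- Re s) * E"
          using norm_powr_bound1[of z s] Rz a0 by (simp add: E_def)
        also have "\<dots> \<le> a powr (- Re s) * E"
          using nz a0 s by (intro mult_right_mono powr_mono2') (auto simp: E_def)
        finally show ?thesis .
      qed
      have den: "exp \<bar>t\<bar> / 2 \<le> norm (sin (of_real pi * z))"
      proof -
        have "\<bar>sin (pi * a)\<bar> * ((exp (pi*t) + exp (- (pi*t))) / 2) \<le> norm (sin (of_real pi * z))"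
          using sin_lower1[of "of_real pi * z"] Rz by simp
        moreover have "\<bar>sin (pi * a)\<bar> = 1" unfolding a_def by (rule sin_half_odd)
        moreover have "exp \<bar>t\<bar> \<le> exp (pi*t) + exp (- (pi*t))"
        proof (cases "t \<ge> 0")
          case True
          have "exp \<bar>t\<bar> \<le> exp (pi*t)" using True pi_gt3 mult_right_mono[of 1 pi t] by simp
          thus ?thesis by (smt (verit) exp_gt_zero)
        next
          case False
          have "exp \<bar>t\<bar> \<le> exp (- (pi*t))" using False pi_gt3 mult_right_mono[of 1 pi "-t"] by simp
          thus ?thesis by (smt (verit) exp_gt_zero)
        qed
        ultimately show ?thesis by simp
      qed
      have "norm (gg s z) = norm (z powr (-s)) / norm (sin (of_real pi * z))"
        by (simp add: gg_def norm_divide)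
      also have "\<dots> \<le> (a powr (- Re s) * E) / (exp \<bar>t\<bar> / 2)"
        by (rule frac_le) (use num den in \<open>auto simp: E_def\<close>)
      also have "\<dots> = B N * exp (- \<bar>t\<bar>)"
        by (simp add: B_def a_def exp_minus field_simps)
      finally show ?thesis by (simp add: z_def)
    qed
    have "norm (integral UNIV (\<lambda>t. gg s (of_real a + \<i> * of_real t))) \<le> integral UNIV (\<lambda>t. B N * exp (- \<bar>t\<bar>))"
      by (rule integral_norm_bound_integral[OF line_integrable[OF a0 az] Kexp_integrable pt])
    also have "\<dots> = B N * I0" by (simp add: I0_def)
    finally show ?thesis by (simp add: a_def)
  qed
  have "(\<lambda>N::nat. (real N + 1/2) powr (- Re s)) \<longlonglongrightarrow> 0"
    using s by real_asymp
  hence "(\<lambda>N. B N * I0) \<longlonglongrightarrow> 0"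
    unfolding B_def by (intro tendsto_mult_left_zero tendsto_mult_right_zero)
  thus ?thesis by (rule Lim_null_comparison[rotated]) (use bnd in auto)
qed

lemma partial_sum_shift:
  "(\<Sum>n<N. (-1) ^ n * of_nat (Suc n) powr (-s)) = - (\<Sum>k=1..N. (-1) ^ k * of_nat k powr (-s) :: complex)"
  by (induction N) (auto simp: sum.nat_ivl_Suc')

lemma eta_series:
  assumes c: "0 < c" "c < 1" and s: "0 < Re s"
  shows "(\<lambda>n. (-1) ^ n * of_nat (Suc n) powr (-s)) sums
           (1/2 * integral UNIV (\<lambda>t. gg s (of_real c + \<i> * of_real t)))"
proof -
  define Lc where "Lc = integral UNIV (\<lambda>t. gg s (of_real c + \<i> * of_real t))"
  define LN where "LN N = integral UNIV (\<lambda>t. gg s (of_real (real N + 1/2) + \<i> * of_real t))" for N :: nat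
  have ev: "\<forall>\<^sub>F N in sequentially. (1/2) * (Lc - LN N) = (\<Sum>n<N. (-1) ^ n * of_nat (Suc n) powr (-s))"
    using eventually_ge_at_top[of 1]
  proof eventually_elim
    case (elim N)
    show ?case using line_diff[OF c elim, of s] unfolding partial_sum_shift LN_def Lc_def
      by (simp add: algebra_simps)
  qed
  have "(\<lambda>N. (1/2) * (Lc - LN N)) \<longlonglongrightarrow> (1/2) * (Lc - 0)"
    using far_line_lim[OF s] unfolding LN_def by (intro tendsto_intros)
  hence "(\<lambda>N. \<Sum>n<N. (-1) ^ n * of_nat (Suc n) powr (-s)) \<longlonglongrightarrow> (1/2) * Lc"
    using Lim_transform_eventually ev by fastforce
  thus ?thesis by (simp add: sums_def Lc_def)
qed

theorem mainTheorem2: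
  fixes c :: real and s :: complex
  assumes "0 < c" and "c < 1"
  shows "(\<lambda>t::real. (of_real c + \<i> * of_real t) powr (- s)
                     / sin (of_real pi * (of_real c + \<i> * of_real t))) integrable_on UNIV
     \<and> eta s = 1/2 * integral UNIV (\<lambda>t::real. (of_real c + \<i> * of_real t) powr (- s)
                     / sin (of_real pi * (of_real c + \<i> * of_real t)))"
proof -
  have cz: "c \<notin> \<int>" by (rule unit_nonint[OF assms])
  define F where "F s = 1/2 * integral UNIV (\<lambda>t. gg s (of_real c + \<i> * of_real t))" for s
  define P where "P f \<longleftrightarrow> f holomorphic_on UNIV \<and>
            (\<forall>s. 0 < Re s \<longrightarrow> (\<lambda>n. (-1) ^ n * of_nat (Suc n) powr (- s)) sums f s)" for f
  have FP: "P F"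
    unfolding P_def
  proof
    show "F holomorphic_on UNIV" unfolding F_def
      by (intro holomorphic_intros line_holo[OF assms(1) cz])
    show "\<forall>s. 0 < Re s \<longrightarrow> (\<lambda>n. (-1) ^ n * of_nat (Suc n) powr (- s)) sums F s"
      using eta_series[OF assms] by (simp add: F_def)
  qed
  have uniq: "f = F" if "P f" for f
  proof
    fix z
    show "f z = F z"
    proof (rule analytic_continuation_open[where s="{w. Re w > 0}" and s'=UNIV and f=f and g=F])
      show "open {w. 0 < Re w}" using open_halfspace_Re_gt by simp
      show "{w. 0 < Re w} \<noteq> {}" by (auto intro: exI[of _ 1])
      show "f holomorphic_on UNIV" using that by (simp add: P_def)
      show "F holomorphic_on UNIV" using FP by (simp add: P_def)
      show "f w = F w" if "w \<in> {w. 0 < Re w}" for w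
      proof -
        from \<open>P f\<close> that have "(\<lambda>n. (-1) ^ n * of_nat (Suc n) powr (- w)) sums f w"
          by (simp add: P_def)
        moreover from FP that have "(\<lambda>n. (-1) ^ n * of_nat (Suc n) powr (- w)) sums F w"
          by (simp add: P_def)
        ultimately show ?thesis by (rule sums_unique2)
      qed
    qed auto
  qed
  have "eta = (THE f. P f)" unfolding eta_def P_def by (rule refl)
  also have "(THE f. P f) = F" using FP uniq by (rule the_equality)
  finally have "eta = F" .
  hence "eta s = F s" by simp
  moreover have "(\<lambda>t::real. gg s (of_real c + \<i> * of_real t)) integrable_on UNIV"
    by (rule line_integrable[OF assms(1) cz])
  ultimately show ?thesis by (simp add: F_def gg_def)
qed

end
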